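(* Let $\mathcal{E}$ be a Euclidean space, $h:\mathcal{E}\to\mathbb{R}\cup\{+\infty\}$ a proper function, and $\mathcal{M}$ a compact embedded submanifold of $\mathcal{E}$ endowed with the induced Riemannian metric. If $h+\delta_{\mathcal{M}}$ is a KL function on $\mathcal{E}$, then the restriction $h_{|\mathcal{M}}$ is a KL function on $\mathcal{M}$; conversely, if $h_{|\mathcal{M}}$ is a KL function on $\mathcal{M}$, then $h+\delta_{\mathcal{M}}$ is a KL function on $\mathcal{E}$.
   Context: $\delta_{\mathcal{M}}$ is the indicator of $\mathcal{M}$ ($0$ on $\mathcal{M}$, $+\infty$ off it). On $\mathcal{E}$, $\partial$ denotes the limiting subdifferential of Rockafellar–Wets. On $\mathcal{M}$, for $g:\mathcal{M}\to\mathbb{R}\cup\{+\infty\}$: the Fréchet subdifferential $\widehat\partial g(x)$ (for $g(x)<\infty$) is the set of Riemannian gradients ${\rm grad}\,\theta(x)$ of functions $\theta$, $C^1$ on $\mathcal{M}$ near $x$, such that $g-\theta$ has a local minimum at $x$; the limiting subdifferential $\partial g(x)$ is the set of limits of $v^k\in\widehat\partial g(x^k)$ with $x^k\to x$, $g(x^k)\to g(x)$. A proper function $g$ (on $\mathcal{E}$ or on $\mathcal{M}$) has the KL property at $\overline{x}\in{\rm dom}\,\partial g$ if there exist $\eta\in(0,+\infty]$, a neighborhood $U$ of $\overline{x}$ and a continuous concave $\varphi:[0,\eta)\to\mathbb{R}_+$ with $\varphi(0)=0$, $\varphi$ $C^1$ on $(0,\eta)$, $\varphi'>0$ there, such that $\varphi'(g(x)-g(\overline{x}))\,{\rm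 dist}(0,\partial g(x))\ge1$ for all $x\in U$ with $g(\overline{x})<g(x)<g(\overline{x})+\eta$ (distance measured in the Euclidean norm, resp. the Riemannian norm); $g$ is a KL function if it has the KL property at every point of ${\rm dom}\,\partial g$. *)

theory Defs
  imports "HOL-Analysis.Analysis"
begin

fun Ck_on :: "nat \<Rightarrow> 'a::euclidean_space set \<Rightarrow> ('a \<Rightarrow> 'b::euclidean_space) \<Rightarrow> bool" where
  "Ck_on 0 U f = continuous_on U f"
| "Ck_on (Suc k) U f =
     ((\<forall>x\<in>U. f differentiable (at x)) \<and>
      (\<forall>e\<in>Basis. Ck_on k U (\<lambda>x. frechet_derivative f (at x) e)))"

definition smooth_on :: "'a::euclidean_space set \<Rightarrow> ('a \<Rightarrow> 'b::euclidean_space) \<Rightarrow> bool" where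
  "smooth_on U f \<longleftrightarrow> (\<forall>k. Ck_on k U f)"

definition embedded_submanifold :: "'a::euclidean_space set \<Rightarrow> bool" where
  "embedded_submanifold M \<longleftrightarrow>
     (\<exists>d. \<forall>x\<in>M. \<exists>U V (\<phi>::'a \<Rightarrow> 'a) \<psi> S.
        open U \<and> x \<in> U \<and> open V \<and> homeomorphism U V \<phi> \<psi> \<and>
        smooth_on U \<phi> \<and> smooth_on V \<psi> \<and>
        subspace S \<and> dim S = d \<and> \<phi> ` (M \<inter> U) = V \<inter> S)"

definition tangent_space :: "'a::euclidean_space set \<Rightarrow> 'a \<Rightarrow> 'a set" where
  "tangent_space M x =
     {v. \<exists>(\<gamma>::real \<Rightarrow> 'a) \<epsilon>. \<epsilon> > 0 \<and> \<gamma> 0 = x \<and> (\<forall>t\<in>{-\<epsilon><..<\<epsilon>}. \<gamma> t \<in> M) \<and>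
          \<gamma> C1_differentiable_on {-\<epsilon><..<\<epsilon>} \<and> vector_derivative \<gamma> (at 0) = v}"

definition frechet_subdiff :: "('a::euclidean_space \<Rightarrow> ereal) \<Rightarrow> 'a \<Rightarrow> 'a set" where
  "frechet_subdiff f x =
     {v. \<bar>f x\<bar> \<noteq> \<infinity> \<and>
         (\<forall>\<epsilon>>0. \<exists>\<delta>>0. \<forall>y. norm (y - x) < \<delta> \<longrightarrow>
            f y \<ge> ereal (real_of_ereal (f x) + inner v (y - x) - \<epsilon> * norm (y - x)))}"

definition limiting_subdiff :: "('a::euclidean_space \<Rightarrow> ereal) \<Rightarrow> 'a \<Rightarrow> 'a set" where
  "limiting_subdiff f x =
     {v. \<bar>f x\<bar> \<noteq> \<infinity> \<and>
         (\<exists>xs vs. xs \<longlonglongrightarrow> x \<and> (\<lambda>k. f (xs k)) \<longlonglongrightarrow> f x \<and>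
                  (\<forall>k. vs k \<in> frechet_subdiff f (xs k)) \<and> vs \<longlonglongrightarrow> v)}"

text \<open>Riemannian Frechet subdifferential of g (considered on M only) at x \<in> M, for the
  induced metric: Riemannian gradients grad theta(x) of functions theta that are C^1 on M near x
  (= restrictions of C^1 functions Theta on an open set U of E) such that g - theta has a
  local minimum at x (on M).  grad theta(x) is the unique tangent vector v with
  inner v w = D Theta(x) w for all tangent vectors w.\<close>
definition riem_frechet_subdiff :: "'a::euclidean_space set \<Rightarrow> ('a \<Rightarrow> ereal) \<Rightarrow> 'a \<Rightarrow> 'a set" where
  "riem_frechet_subdiff M g x =
     {v. x \<in> M \<and> \<bar>g x\<bar> \<noteq> \<infinity> \<and>
         (\<exists>U (\<Theta>::'a \<Rightarrow> real). open U \<and> x \<in> U \<and> Ck_on 1 U \<Theta> \<and>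
            (\<forall>y\<in>M \<inter> U. g y - ereal (\<Theta> y) \<ge> g x - ereal (\<Theta> x)) \<and>
            v \<in> tangent_space M x \<and>
            (\<forall>w\<in>tangent_space M x. inner v w = frechet_derivative \<Theta> (at x) w))}"

definition riem_limiting_subdiff :: "'a::euclidean_space set \<Rightarrow> ('a \<Rightarrow> ereal) \<Rightarrow> 'a \<Rightarrow> 'a set" where
  "riem_limiting_subdiff M g x =
     {v. x \<in> M \<and> \<bar>g x\<bar> \<noteq> \<infinity> \<and>
         (\<exists>xs vs. (\<forall>k. xs k \<in> M) \<and> xs \<longlonglongrightarrow> x \<and> (\<lambda>k. g (xs k)) \<longlonglongrightarrow> g x \<and>
                  (\<forall>k. vs k \<in> riem_frechet_subdiff M g (xs k)) \<and> vs \<longlonglongrightarrow> v)}"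

text \<open>Generic KL property of g on the domain D (D = UNIV for E, D = M for the manifold),
  w.r.t. the subdifferential sd.  dist(0, {}) = +\<infinity>, so the inequality is vacuous
  when sd x is empty.\<close>
definition KL_at :: "('a::euclidean_space \<Rightarrow> 'a set) \<Rightarrow> 'a set \<Rightarrow> ('a \<Rightarrow> ereal) \<Rightarrow> 'a \<Rightarrow> bool" where
  "KL_at sd D g xb \<longleftrightarrow>
     (\<exists>(\<eta>::ereal) U (\<phi>::real \<Rightarrow> real).
        \<eta> > 0 \<and> open U \<and> xb \<in> U \<and>
        continuous_on {s. 0 \<le> s \<and> ereal s < \<eta>} \<phi> \<and>
        concave_on {s. 0 \<le> s \<and> ereal s < \<eta>} \<phi> \<and>
        \<phi> 0 = 0 \<and> (\<forall>s. 0 \<le> s \<and> ereal s < \<eta> \<longrightarrow> \<phi> s \<ge> 0) \<and>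
        (\<forall>s. 0 < s \<and> ereal s < \<eta> \<longrightarrow> \<phi> differentiable (at s) \<and> deriv \<phi> s > 0) \<and>
        continuous_on {s. 0 < s \<and> ereal s < \<eta>} (deriv \<phi>) \<and>
        (\<forall>x\<in>U \<inter> D. g xb < g x \<and> g x < g xb + \<eta> \<longrightarrow> sd x \<noteq> {} \<longrightarrow>
            deriv \<phi> (real_of_ereal (g x - g xb)) * infdist 0 (sd x) \<ge> 1))"

definition proper_on :: "'a set \<Rightarrow> ('a \<Rightarrow> ereal) \<Rightarrow> bool" where
  "proper_on D g \<longleftrightarrow> (\<exists>x\<in>D. g x \<noteq> \<infinity>) \<and> (\<forall>x\<in>D. g x \<noteq> -\<infinity>)"

definition KL_function :: "('a::euclidean_space \<Rightarrow> 'a set) \<Rightarrow> 'a set \<Rightarrow> ('a \<Rightarrow> ereal) \<Rightarrow> bool" where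
  "KL_function sd D g \<longleftrightarrow> proper_on D g \<and> (\<forall>x\<in>D. sd x \<noteq> {} \<longrightarrow> KL_at sd D g x)"

abbreviation KL_function_E :: "('a::euclidean_space \<Rightarrow> ereal) \<Rightarrow> bool" where
  "KL_function_E g \<equiv> KL_function (limiting_subdiff g) UNIV g"

abbreviation KL_function_M :: "'a::euclidean_space set \<Rightarrow> ('a \<Rightarrow> ereal) \<Rightarrow> bool" where
  "KL_function_M M g \<equiv> KL_function (riem_limiting_subdiff M g) M g"

definition plus_indicator :: "('a \<Rightarrow> ereal) \<Rightarrow> 'a set \<Rightarrow> 'a \<Rightarrow> ereal" where
  "plus_indicator h M = (\<lambda>x. if x \<in> M then h x else \<infinity>)"

end

theory Submission
  imports Defs "HOL-Analysis.Analysis"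
begin

lemma tau_exists:
  fixes w :: "real \<Rightarrow> real"
  assumes mono: "mono_on {0..} w" and nonneg: "\<And>r. 0 \<le> r \<Longrightarrow> 0 \<le> w r"
    and lim0: "\<And>e. e > 0 \<Longrightarrow> \<exists>d>0. \<forall>r. 0 \<le> r \<and> r < d \<longrightarrow> w r \<le> e"
  shows "\<exists>tau tau'. tau 0 = 0 \<and> (\<forall>r>0. (tau has_real_derivative tau' r) (at r))
     \<and> continuous_on {0..} tau' \<and> tau' 0 = 0
     \<and> (\<forall>e>0. \<exists>d>0. \<forall>r. 0 < r \<and> r < d \<longrightarrow> \<bar>tau r\<bar> \<le> e * r)
     \<and> (\<forall>r\<ge>0. r * w r \<le> tau r)"
proof -
  define A where "A r = integral {0..r} w" for r
  define eta where "eta s = (if s \<le> 0 then 0 else (A (2 * s) - A s) / s)" for s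
  define G where "G u = integral {0..u} eta" for u
  define tau where "tau r = G (2 * r)" for r
  define tau' where "tau' r = 2 * eta (2 * r)" for r
  have wint: "w integrable_on {a..b}" if "0 \<le> a" for a b
    by (rule integrable_on_mono_on, rule mono_on_subset[OF mono]) (use that in auto)
  have Adiff: "A (2 * s) - A s = integral {s..2 * s} w" if "0 \<le> s" for s
    using Henstock_Kurzweil_Integration.integral_combine[of 0 s "2 * s" w] wint[of 0 "2 * s"] that
    unfolding A_def by simp
  have eta_bounds: "w s \<le> eta s \<and> eta s \<le> w (2 * s)" if "0 < s" for s
  proof -
    have "integral {s..2 * s} (\<lambda>x. w s) \<le> integral {s..2 * s} w"
      by (rule integral_le) (use that wint in \<open>auto intro!: mono_onD[OF mono]\<close>)
    moreover have "integral {s..2 * s} w \<le> integral {s..2 * s} (\<lambda>x. w (2 * s))"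
      by (rule integral_le) (use that wint in \<open>auto intro!: mono_onD[OF mono]\<close>)
    ultimately have "s * w s \<le> A (2 * s) - A s \<and> A (2 * s) - A s \<le> s * w (2 * s)"
      using that Adiff[of s] by simp
    then show ?thesis using that unfolding eta_def by (auto simp: field_simps)
  qed
  have eta_nonneg: "0 \<le> eta s" for s
    using eta_bounds[of s] nonneg[of s] by (cases "s \<le> 0") (auto simp: eta_def)
  have w0: "w 0 = 0"
  proof -
    have "w 0 \<le> e" if "e > 0" for e using lim0[OF that] by auto
    then have "w 0 \<le> 0" by (meson dense not_le)
    with nonneg[of 0] show ?thesis by simp
  qed
  have Acont: "isCont A x" if "0 < x" for x
  proof -
    have "continuous_on {0..x+1} A"
      using indefinite_integral_continuous_1[OF wint[of 0 "x+1"]] unfolding A_def by simp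
    then show ?thesis by (rule continuous_on_interior) (use that in auto)
  qed
  have ceta: "continuous_on {0<..} (\<lambda>s. (A (2 * s) - A s) / s)"
  proof (rule continuous_at_imp_continuous_on, rule ballI)
    fix x :: real assume "x \<in> {0<..}"
    then have x: "0 < x" by simp
    have c1: "isCont (\<lambda>s. A (2 * s)) x"
      using Acont[of "2 * x"] x by (intro continuous_intros isCont_o2[where f="\<lambda>s. 2 * s" and g=A]) auto
    have c2: "isCont (\<lambda>s. A (2 * s) - A s) x" by (rule isCont_diff[OF c1 Acont[OF x]])
    show "isCont (\<lambda>s. (A (2 * s) - A s) / s) x"
      using x by (auto intro!: isCont_divide[OF c2])
  qed
  have ceta2: "continuous_on {0<..} eta"
    by (rule continuous_on_eq[OF ceta]) (auto simp: eta_def)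
  have etacont: "continuous_on {0..} eta"
    unfolding continuous_on_eq_continuous_within
  proof
    fix x :: real assume "x \<in> {0..}"
    show "continuous (at x within {0..}) eta"
    proof (cases "x = 0")
      case False
      with \<open>x \<in> {0..}\<close> have "x > 0" by simp
      then have "isCont eta x" using continuous_on_interior[OF ceta2, of x] by (simp add: interior_open)
      then show ?thesis using continuous_at_imp_continuous_within by blast
    next
      case True
      show ?thesis unfolding True continuous_within Lim_within
      proof (intro allI impI)
        fix e :: real assume "e > 0"
        then obtain d where d: "d > 0" "\<forall>r. 0 \<le> r \<and> r < d \<longrightarrow> w r \<le> e/2"
          using lim0[of "e/2"] by auto
        show "\<exists>d>0. \<forall>s\<in>{0..}. 0 < dist s 0 \<and> dist s 0 < d \<longrightarrow> dist (eta s) (eta 0) < e"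
        proof (intro exI[of _ "d/2"] conjI ballI impI)
          fix s :: real assume "s \<in> {0..}" "0 < dist s 0 \<and> dist s 0 < d/2"
          then have s: "0 < s" "s < d/2" by auto
          then have "eta s \<le> e/2" using eta_bounds[of s] d(2)[rule_format, of "2 * s"] by auto
          then show "dist (eta s) (eta 0) < e" using eta_nonneg[of s] \<open>e>0\<close>
            by (auto simp: eta_def dist_real_def)
        qed (use d in auto)
      qed
    qed
  qed
  have Gder: "(G has_real_derivative eta u) (at u)" if "0 < u" for u
  proof -
    have "(G has_real_derivative eta u) (at u within {0..u+1})"
      unfolding G_def
      by (rule integral_has_real_derivative)
         (use that in \<open>auto intro: continuous_on_subset[OF etacont]\<close>)
    moreover have "at u within {0..u+1} = at u"
      by (rule at_within_interior) (use that in auto)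
    ultimately show ?thesis by simp
  qed
  have tauder: "(tau has_real_derivative tau' r) (at r)" if "0 < r" for r
  proof -
    have "((\<lambda>r. G (2 * r)) has_real_derivative eta (2 * r) * 2) (at r)"
      by (rule DERIV_chain2[OF Gder]) (use that in \<open>auto intro!: derivative_eq_intros\<close>)
    then show ?thesis unfolding tau_def tau'_def by (simp add: mult.commute)
  qed
  have taucont: "continuous_on {0..} tau'"
  proof -
    have "continuous_on {0..} (\<lambda>r. eta (2 * r))"
      by (rule continuous_on_compose2[OF etacont]) (auto intro!: continuous_intros)
    then show ?thesis unfolding tau'_def by (intro continuous_intros)
  qed
  have etaint: "eta integrable_on {a..b}" if "0 \<le> a" for a b
    by (rule integrable_continuous_real, rule continuous_on_subset[OF etacont]) (use that in auto)
  have tau_up: "tau r \<le> 2 * r * w (4 * r)" if "0 < r" for r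
  proof -
    have "tau r \<le> integral {0..2 * r} (\<lambda>s. w (4 * r))"
      unfolding tau_def G_def
    proof (rule integral_le[OF etaint])
      fix s assume s: "s \<in> {0..2 * r}"
      show "eta s \<le> w (4 * r)"
      proof (cases "s = 0")
        case True then show ?thesis using nonneg[of "4 * r"] that by (simp add: eta_def)
      next
        case False
        then have "eta s \<le> w (2 * s)" using eta_bounds[of s] s by auto
        also have "\<dots> \<le> w (4 * r)" using s False by (intro mono_onD[OF mono]) auto
        finally show ?thesis .
      qed
    qed auto
    then show ?thesis using that by simp
  qed
  have tau_nonneg: "0 \<le> tau r" if "0 \<le> r" for r
    unfolding tau_def G_def by (rule integral_nonneg[OF etaint]) (use eta_nonneg in auto)
  have tau_low: "r * w r \<le> tau r" if "0 \<le> r" for r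
  proof (cases "r = 0")
    case True then show ?thesis using w0 by (simp add: tau_def G_def)
  next
    case False
    then have r: "0 < r" using that by simp
    have "integral {r..2 * r} (\<lambda>s. w r) \<le> integral {r..2 * r} eta"
    proof (rule integral_le[OF _ etaint])
      fix s assume s: "s \<in> {r..2 * r}"
      then have "w r \<le> w s" using r by (intro mono_onD[OF mono]) auto
      also have "\<dots> \<le> eta s" using eta_bounds[of s] s r by auto
      finally show "w r \<le> eta s" .
    qed (use r in auto)
    moreover have "integral {0..r} eta + integral {r..2 * r} eta = tau r"
      unfolding tau_def G_def
      by (rule Henstock_Kurzweil_Integration.integral_combine) (use r etaint in auto)
    moreover have "0 \<le> integral {0..r} eta"
      by (rule integral_nonneg[OF etaint]) (use eta_nonneg in auto)
    ultimately show ?thesis using r by simp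
  qed
  show ?thesis
  proof (rule exI[of _ tau], rule exI[of _ tau'], intro conjI allI impI)
    show "tau 0 = 0" by (simp add: tau_def G_def)
    show "tau' 0 = 0" by (simp add: tau'_def eta_def)
    show "continuous_on {0..} tau'" by (rule taucont)
    show "(tau has_real_derivative tau' r) (at r)" if "0 < r" for r using tauder that by blast
    show "r * w r \<le> tau r" if "0 \<le> r" for r using tau_low that by blast
    fix e :: real assume "e > 0"
    then obtain d where d: "d > 0" "\<forall>r. 0 \<le> r \<and> r < d \<longrightarrow> w r \<le> e/2"
      using lim0[of "e/2"] by auto
    show "\<exists>d>0. \<forall>r. 0 < r \<and> r < d \<longrightarrow> \<bar>tau r\<bar> \<le> e * r"
    proof (intro exI[of _ "d/4"] conjI allI impI)
      fix r :: real assume r: "0 < r \<and> r < d/4"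
      have "w (4 * r) \<le> e/2" using d r by auto
      then have "2 * r * w (4 * r) \<le> 2 * r * (e/2)" using r by (intro mult_left_mono) auto
      then have "2 * r * w (4 * r) \<le> e * r" by (simp add: algebra_simps)
      then show "\<bar>tau r\<bar> \<le> e * r" using tau_up[of r] tau_nonneg[of r] r by linarith
    qed (use d in auto)
  qed
qed

lemma rho_exists:
  fixes q :: "'a::euclidean_space \<Rightarrow> real" and y :: 'a
  assumes r1: "r1 > 0"
    and qb: "\<And>z. norm (z - y) \<le> r1 \<Longrightarrow> 0 \<le> q z \<and> q z \<le> norm (z - y)"
    and qf: "\<And>e. e > 0 \<Longrightarrow> \<exists>d>0. \<forall>z. norm (z - y) < d \<longrightarrow> q z \<le> e * norm (z - y)"
  shows "\<exists>\<rho> \<rho>'. (\<forall>x. (\<rho> has_derivative \<rho>' x) (at x)) \<and> \<rho>' y = (\<lambda>h. 0)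
     \<and> (\<forall>e. continuous_on UNIV (\<lambda>x. \<rho>' x e)) \<and> \<rho> y = 0
     \<and> (\<forall>z. norm (z - y) \<le> r1 \<longrightarrow> q z \<le> \<rho> z)"
proof -
  define Q where "Q r = insert 0 {q z / norm (z - y) | z. 0 < norm (z - y) \<and> norm (z - y) \<le> min r r1}" for r
  define w where "w r = Sup (Q r)" for r
  have Qbdd: "bdd_above (Q r)" for r
  proof -
    have "\<forall>x\<in>Q r. x \<le> 1"
      using qb by (auto simp: Q_def divide_le_eq_1)
    then show ?thesis by (auto intro: bdd_aboveI2)
  qed
  have Qne: "Q r \<noteq> {}" for r by (simp add: Q_def)
  have wmono: "mono_on {0..} w"
  proof (rule mono_onI)
    fix r s :: real assume "r \<in> {0..}" "s \<in> {0..}" "r \<le> s"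
    then have "Q r \<subseteq> Q s" unfolding Q_def by auto
    then show "w r \<le> w s" unfolding w_def by (rule cSup_subset_mono[OF Qne Qbdd])
  qed
  have wnonneg: "0 \<le> w r" for r
    unfolding w_def by (rule cSup_upper[OF _ Qbdd]) (simp add: Q_def)
  have wlim: "\<exists>d>0. \<forall>r. 0 \<le> r \<and> r < d \<longrightarrow> w r \<le> e" if epos: "e > 0" for e
  proof -
    obtain d where d: "d > 0" "\<forall>z. norm (z - y) < d \<longrightarrow> q z \<le> e * norm (z - y)"
      using qf[OF epos] by auto
    show ?thesis
    proof (intro exI[of _ d] conjI allI impI)
      fix r assume r: "0 \<le> r \<and> r < d"
      show "w r \<le> e" unfolding w_def
      proof (rule cSup_least[OF Qne])
        fix x assume "x \<in> Q r"
        then show "x \<le> e"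
        proof (cases "x = 0")
          case False
          with \<open>x \<in> Q r\<close> obtain z where z: "x = q z / norm (z - y)" "0 < norm (z - y)" "norm (z - y) \<le> min r r1"
            unfolding Q_def by auto
          then have "q z \<le> e * norm (z - y)" using d r by auto
          then show ?thesis using z by (simp add: divide_le_eq)
        qed (use epos in auto)
      qed
    qed (use d in auto)
  qed
  have qw: "q z \<le> norm (z - y) * w (norm (z - y))" if "norm (z - y) \<le> r1" for z
  proof (cases "z = y")
    case True then show ?thesis using qb[of y] r1 by simp
  next
    case False
    then have n: "0 < norm (z - y)" by simp
    have "q z / norm (z - y) \<in> Q (norm (z - y))" unfolding Q_def using n that by auto
    then have "q z / norm (z - y) \<le> w (norm (z - y))" unfolding w_def by (rule cSup_upper[OF _ Qbdd])
    then show ?thesis using n by (simp add: divide_le_eq mult.commute)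
  qed
  obtain tau tau' where tau: "tau 0 = 0" "\<forall>r>0. (tau has_real_derivative tau' r) (at r)"
     "continuous_on {0..} tau'" "tau' 0 = 0"
     "\<forall>e>0. \<exists>d>0. \<forall>r. 0 < r \<and> r < d \<longrightarrow> \<bar>tau r\<bar> \<le> e * r"
     "\<forall>r\<ge>0. r * w r \<le> tau r"
    using tau_exists[OF wmono _ wlim] wnonneg by blast
  define \<rho> where "\<rho> z = tau (norm (z - y))" for z
  define \<rho>' where "\<rho>' x = (\<lambda>h. tau' (norm (x - y)) * (h \<bullet> sgn (x - y)))" for x
  have der: "(\<rho> has_derivative \<rho>' x) (at x)" for x
  proof (cases "x = y")
    case False
    then have n: "0 < norm (x - y)" by simp
    have d1: "((\<lambda>z. norm (z - y)) has_derivative (\<lambda>h. h \<bullet> sgn (x - y))) (at x)"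
      using has_derivative_compose[OF has_derivative_diff[OF has_derivative_ident has_derivative_const]
          has_derivative_norm[of "x - y"]] False by simp
    have d2: "(tau has_derivative (\<lambda>u. tau' (norm (x - y)) * u)) (at (norm (x - y)))"
      using has_field_derivative_imp_has_derivative[OF tau(2)[rule_format, OF n]] by simp
    show ?thesis
      using has_derivative_compose[OF d1 d2] unfolding \<rho>_def \<rho>'_def by simp
  next
    case True
    have "(\<rho> has_derivative (\<lambda>h. 0)) (at y)"
      unfolding has_derivative_at
    proof (intro conjI)
      show "bounded_linear (\<lambda>h::'a. 0::real)" by simp
      show "(\<lambda>h. norm (\<rho> (y + h) - \<rho> y - 0) / norm h) \<midarrow>0\<rightarrow> 0"
        unfolding LIM_eq
      proof (intro allI impI)
        fix e :: real assume e: "e > 0"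
        obtain d where d: "d > 0" "\<forall>r. 0 < r \<and> r < d \<longrightarrow> \<bar>tau r\<bar> \<le> e/2 * r"
          using tau(5) e by (meson half_gt_zero)
        show "\<exists>s>0. \<forall>x. x \<noteq> 0 \<and> norm (x - 0) < s \<longrightarrow> norm (norm (\<rho> (y + x) - \<rho> y - 0) / norm x - 0) < e"
        proof (intro exI[of _ d] conjI allI impI)
          fix x :: 'a assume x: "x \<noteq> 0 \<and> norm (x - 0) < d"
          then have "\<bar>tau (norm x)\<bar> \<le> e/2 * norm x" using d by auto
          then have "\<bar>tau (norm x)\<bar> / norm x \<le> e/2" using x by (simp add: divide_le_eq)
          then have "\<bar>tau (norm x)\<bar> / norm x < e" using e by linarith
          then show "norm (norm (\<rho> (y + x) - \<rho> y - 0) / norm x - 0) < e"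
            by (simp add: \<rho>_def tau(1))
        qed (use d in auto)
      qed
    qed
    moreover have "\<rho>' y = (\<lambda>h. 0)" by (simp add: \<rho>'_def)
    ultimately show ?thesis using True by simp
  qed
  have tc: "continuous_on UNIV (\<lambda>x. tau' (norm (x - y)))"
    by (rule continuous_on_compose2[OF tau(3)]) (auto intro!: continuous_intros)
  have cont: "continuous_on UNIV (\<lambda>x. \<rho>' x e)" for e
  proof (rule continuous_at_imp_continuous_on, rule ballI)
    fix x :: 'a assume "x \<in> UNIV"
    show "isCont (\<lambda>x. \<rho>' x e) x"
    proof (cases "x = y")
      case False
      have "isCont (\<lambda>x. tau' (norm (x - y))) x" using tc by (simp add: continuous_on_eq_continuous_at)
      moreover have "isCont (\<lambda>x. e \<bullet> sgn (x - y)) x"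
        unfolding sgn_div_norm using False by (intro continuous_intros) auto
      ultimately show ?thesis unfolding \<rho>'_def by (rule isCont_mult)
    next
      case True
      have "((\<lambda>x. \<rho>' x e) \<longlongrightarrow> 0) (at y)"
      proof (rule Lim_null_comparison)
        show "\<forall>\<^sub>F x in at y. norm (\<rho>' x e) \<le> \<bar>tau' (norm (x - y))\<bar> * norm e"
        proof (rule always_eventually, rule allI)
          fix x
          have "\<bar>e \<bullet> sgn (x - y)\<bar> \<le> norm e * norm (sgn (x - y))" by (rule Cauchy_Schwarz_ineq2)
          also have "\<dots> \<le> norm e" by (simp add: norm_sgn mult_le_cancel_left1)
          finally show "norm (\<rho>' x e) \<le> \<bar>tau' (norm (x - y))\<bar> * norm e"
            unfolding \<rho>'_def by (simp add: abs_mult mult_left_mono)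
        qed
        have "isCont (\<lambda>x. tau' (norm (x - y))) y" using tc by (simp add: continuous_on_eq_continuous_at)
        then have "((\<lambda>x. tau' (norm (x - y))) \<longlongrightarrow> 0) (at y)"
          using tau(4) by (simp add: isCont_def)
        then show "((\<lambda>x. \<bar>tau' (norm (x - y))\<bar> * norm e) \<longlongrightarrow> 0) (at y)"
          by (intro tendsto_mult_left_zero tendsto_rabs_zero)
      qed
      then show ?thesis using True by (simp add: isCont_def \<rho>'_def)
    qed
  qed
  show ?thesis
  proof (rule exI[of _ \<rho>], rule exI[of _ \<rho>'], intro conjI allI impI)
    show "\<rho>' y = (\<lambda>h. 0)" by (simp add: \<rho>'_def)
    show "\<rho> y = 0" by (simp add: \<rho>_def tau(1))
    fix z assume z: "norm (z - y) \<le> r1"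
    show "q z \<le> \<rho> z" using qw[OF z] tau(6) unfolding \<rho>_def by (meson norm_ge_zero order_trans)
  qed (use der cont in auto)
qed

locale slice_chart =
  fixes M U V :: "'a::euclidean_space set" and \<phi> \<psi> :: "'a \<Rightarrow> 'a" and S :: "'a set" and y :: 'a
  assumes oU: "open U" and yU: "y \<in> U" and oV: "open V" and hom: "homeomorphism U V \<phi> \<psi>"
    and sphi: "smooth_on U \<phi>" and spsi: "smooth_on V \<psi>" and sS: "subspace S"
    and img: "\<phi> ` (M \<inter> U) = V \<inter> S" and yM: "y \<in> M"
begin

lemma psi_phi: "x \<in> U \<Longrightarrow> \<psi> (\<phi> x) = x" using hom by (auto simp: homeomorphism_def)
lemma phi_psi: "s \<in> V \<Longrightarrow> \<phi> (\<psi> s) = s" using hom by (auto simp: homeomorphism_def)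
lemma phiU: "x \<in> U \<Longrightarrow> \<phi> x \<in> V" using hom by (auto simp: homeomorphism_def)
lemma psiV: "s \<in> V \<Longrightarrow> \<psi> s \<in> U" using hom by (auto simp: homeomorphism_def)
lemma psi_slice: "s \<in> V \<Longrightarrow> s \<in> S \<Longrightarrow> \<psi> s \<in> M"
proof -
  assume "s \<in> V" "s \<in> S"
  then obtain x where "x \<in> M \<inter> U" "s = \<phi> x" using img by blast
  then show "\<psi> s \<in> M" using psi_phi by auto
qed
lemma phi_slice: "x \<in> M \<Longrightarrow> x \<in> U \<Longrightarrow> \<phi> x \<in> S" using img by blast

lemma phi_diff: "x \<in> U \<Longrightarrow> \<phi> differentiable (at x)"
  using sphi[unfolded smooth_on_def, rule_format, of 1] by simp
lemma psi_diff: "s \<in> V \<Longrightarrow> \<psi> differentiable (at s)"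
  using spsi[unfolded smooth_on_def, rule_format, of 1] by simp
lemma psi_partial_cont: "e \<in> Basis \<Longrightarrow> continuous_on V (\<lambda>s. frechet_derivative \<psi> (at s) e)"
  using spsi[unfolded smooth_on_def, rule_format, of 1] by simp

definition s0 where "s0 = \<phi> y"
definition D\<psi> where "D\<psi> = frechet_derivative \<psi> (at s0)"
definition D\<phi> where "D\<phi> = frechet_derivative \<phi> (at y)"

lemma s0V: "s0 \<in> V" using phiU yU by (simp add: s0_def)
lemma s0S: "s0 \<in> S" using phi_slice yM yU by (simp add: s0_def)
lemma psi_s0: "\<psi> s0 = y" using psi_phi yU by (simp add: s0_def)

lemma Dpsi: "(\<psi> has_derivative D\<psi>) (at s0)"
  using psi_diff[OF s0V] by (simp add: D\<psi>_def frechet_derivative_works)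
lemma Dphi: "(\<phi> has_derivative D\<phi>) (at y)"
  using phi_diff[OF yU] by (simp add: D\<phi>_def frechet_derivative_works)

lemma frechet_lin_rep:
  assumes "s \<in> V"
  shows "frechet_derivative \<psi> (at s) u = (\<Sum>b\<in>Basis. (u \<bullet> b) *\<^sub>R frechet_derivative \<psi> (at s) b)"
proof -
  have lin: "linear (frechet_derivative \<psi> (at s))"
    by (rule linear_frechet_derivative[OF psi_diff[OF assms]])
  have "frechet_derivative \<psi> (at s) u = frechet_derivative \<psi> (at s) (\<Sum>b\<in>Basis. (u \<bullet> b) *\<^sub>R b)"
    by (simp add: euclidean_representation)
  also have "\<dots> = (\<Sum>b\<in>Basis. (u \<bullet> b) *\<^sub>R frechet_derivative \<psi> (at s) b)"
    by (simp add: linear_sum[OF lin] linear_scale[OF lin])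
  finally show ?thesis .
qed

lemma tangent_contains:
  assumes u: "u \<in> S"
  shows "D\<psi> u \<in> tangent_space M y"
proof -
  obtain e where e: "e > 0" "ball s0 e \<subseteq> V" using oV s0V openE by blast
  define e' where "e' = e / (norm u + 1)"
  have e': "e' > 0" using e unfolding e'_def by (intro divide_pos_pos) (auto intro: add_nonneg_pos)
  define \<gamma> where "\<gamma> t = \<psi> (s0 + t *\<^sub>R u)" for t :: real
  have inV: "s0 + t *\<^sub>R u \<in> V" if "t \<in> {-e'<..<e'}" for t
  proof -
    have "\<bar>t\<bar> < e'" using that by auto
    then have "norm (t *\<^sub>R u) \<le> e' * norm u" by (simp add: mult_right_mono)
    also have "\<dots> < e' * (norm u + 1)" using e' by simp
    also have "\<dots> = e"
    proof -
      have nu: "norm u + 1 > 0" using norm_ge_zero[of u] by linarith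
      then show ?thesis unfolding e'_def by simp
    qed
    finally have "norm (t *\<^sub>R u) < e" .
    then show ?thesis using e(2) by (auto simp: dist_norm)
  qed
  define D where "D t = frechet_derivative \<psi> (at (s0 + t *\<^sub>R u)) u" for t
  have vd: "(\<gamma> has_vector_derivative D t) (at t)" if "t \<in> {-e'<..<e'}" for t
  proof -
    have d1: "((\<lambda>t. s0 + t *\<^sub>R u) has_derivative (\<lambda>h. h *\<^sub>R u)) (at t)"
      by (auto intro!: derivative_eq_intros)
    have d2: "(\<psi> has_derivative frechet_derivative \<psi> (at (s0 + t *\<^sub>R u))) (at (s0 + t *\<^sub>R u))"
      using psi_diff[OF inV[OF that]] by (simp add: frechet_derivative_works)
    have lin: "linear (frechet_derivative \<psi> (at (s0 + t *\<^sub>R u)))"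
      by (rule linear_frechet_derivative[OF psi_diff[OF inV[OF that]]])
    show ?thesis
      using has_derivative_compose[OF d1 d2] unfolding has_vector_derivative_def \<gamma>_def D_def
      by (simp add: linear_scale[OF lin])
  qed
  have Dcont: "continuous_on {-e'<..<e'} D"
  proof -
    have "continuous_on {-e'<..<e'} (\<lambda>t. \<Sum>b\<in>Basis. (u \<bullet> b) *\<^sub>R frechet_derivative \<psi> (at (s0 + t *\<^sub>R u)) b)"
    proof (intro continuous_on_sum continuous_on_scaleR continuous_on_const)
      fix b :: 'a assume b: "b \<in> Basis"
      show "continuous_on {-e'<..<e'} (\<lambda>t. frechet_derivative \<psi> (at (s0 + t *\<^sub>R u)) b)"
        by (rule continuous_on_compose2[OF psi_partial_cont[OF b]])
           (use inV in \<open>auto intro!: continuous_intros\<close>)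
    qed
    then show ?thesis
      by (rule continuous_on_eq) (use inV frechet_lin_rep in \<open>auto simp: D_def\<close>)
  qed
  have "0 \<in> {-e'<..<e'}" using e' by simp
  have "\<gamma> t \<in> M" if "t \<in> {-e'<..<e'}" for t
    unfolding \<gamma>_def
    by (rule psi_slice[OF inV[OF that]]) (use sS s0S u in \<open>auto intro: subspace_add subspace_scale\<close>)
  moreover have "\<gamma> 0 = y" by (simp add: \<gamma>_def psi_s0)
  moreover have "\<gamma> C1_differentiable_on {-e'<..<e'}"
    unfolding C1_differentiable_on_def using vd Dcont by blast
  moreover have "vector_derivative \<gamma> (at 0) = D\<psi> u"
    using vector_derivative_at[OF vd[OF \<open>0 \<in> _\<close>]] by (simp add: D_def D\<psi>_def)
  ultimately show ?thesis unfolding tangent_space_def using e' by blast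
qed


lemma Dpsi_Dphi: "D\<psi> (D\<phi> v) = v"
proof -
  have "((\<lambda>x. \<psi> (\<phi> x)) has_derivative (\<lambda>h. D\<psi> (D\<phi> h))) (at y)"
    using has_derivative_compose[OF Dphi, of \<psi> D\<psi>] Dpsi by (simp add: s0_def)
  then have "((\<lambda>x. x) has_derivative (\<lambda>h. D\<psi> (D\<phi> h))) (at y)"
    by (rule has_derivative_transform_within_open[OF _ oU yU]) (simp add: psi_phi)
  then have "(\<lambda>h. D\<psi> (D\<phi> h)) = (\<lambda>h. h)"
    using has_derivative_unique[OF _ has_derivative_ident] by blast
  then show ?thesis using fun_cong[of "\<lambda>h. D\<psi> (D\<phi> h)" "\<lambda>h. h" v] by simp
qed

lemma tangent_sub:
  assumes v: "v \<in> tangent_space M y"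
  shows "v \<in> D\<psi> ` S"
proof -
  obtain \<gamma> e where g: "e > 0" "\<gamma> 0 = y" "\<forall>t\<in>{-e<..<e}. \<gamma> t \<in> M"
    "\<gamma> C1_differentiable_on {-e<..<e}" "vector_derivative \<gamma> (at 0) = v"
    using v unfolding tangent_space_def by blast
  obtain D where D: "\<forall>t\<in>{-e<..<e}. (\<gamma> has_vector_derivative D t) (at t)"
    using g(4) unfolding C1_differentiable_on_def by blast
  have "0 \<in> {-e<..<e}" using g(1) by simp
  then have g00: "(\<gamma> has_vector_derivative D 0) (at 0)" using D by blast
  then have g0: "(\<gamma> has_vector_derivative v) (at 0)"
    using vector_derivative_at[OF g00] g(5) by simp
  have "isCont \<gamma> 0" using has_vector_derivative_continuous[OF g0] .
  moreover obtain r where r: "r > 0" "ball y r \<subseteq> U" using oU yU openE by blast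
  ultimately obtain d where d: "d > 0" "\<forall>t. dist t 0 < d \<longrightarrow> dist (\<gamma> t) (\<gamma> 0) < r"
    unfolding continuous_at_eps_delta by blast
  define d' where "d' = min d e"
  have d': "d' > 0" using d g by (simp add: d'_def)
  have inS: "\<phi> (\<gamma> t) \<in> S" if "t \<in> ball 0 d'" for t
  proof -
    have "\<gamma> t \<in> U" using d(2)[rule_format, of t] that r(2) g(2) by (auto simp: d'_def dist_commute)
    moreover have "\<gamma> t \<in> M" using g(3) that by (auto simp: d'_def dist_real_def abs_less_iff)
    ultimately show ?thesis by (rule phi_slice[rotated])
  qed
  have dc: "((\<lambda>t. \<phi> (\<gamma> t)) has_derivative (\<lambda>h. D\<phi> (h *\<^sub>R v))) (at 0)"
    using has_derivative_compose[OF g0[unfolded has_vector_derivative_def], of \<phi> D\<phi>] Dphi g(2) by simp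
  obtain a n where an: "a \<in> span S" "\<And>w. w \<in> span S \<Longrightarrow> orthogonal n w" "D\<phi> v = a + n"
    using orthogonal_subspace_decomp_exists by blast
  have "((\<lambda>t. n \<bullet> \<phi> (\<gamma> t)) has_derivative (\<lambda>h. n \<bullet> D\<phi> (h *\<^sub>R v))) (at 0)"
    by (rule has_derivative_inner_right[OF dc])
  then have "((\<lambda>t. 0::real) has_derivative (\<lambda>h. n \<bullet> D\<phi> (h *\<^sub>R v))) (at 0)"
    by (rule has_derivative_transform_within_open[of _ _ _ _ "ball 0 d'"]) (use d' inS an(2) span_base in \<open>auto simp: orthogonal_def\<close>)
  then have "(\<lambda>h. n \<bullet> D\<phi> (h *\<^sub>R v)) = (\<lambda>h. 0)"
    using has_derivative_unique[OF _ has_derivative_const] by blast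
  then have "n \<bullet> D\<phi> v = 0" using fun_cong[of "\<lambda>h. n \<bullet> D\<phi> (h *\<^sub>R v)" "\<lambda>h. 0" 1] by simp
  moreover have "n \<bullet> a = 0" using an(1,2) by (simp add: orthogonal_def inner_commute)
  ultimately have "n \<bullet> n = 0" using an(3) by (simp add: inner_add_right)
  then have "n = 0" by simp
  moreover have "a \<in> S" using an(1) sS by (metis span_eq_iff)
  ultimately have "D\<phi> v \<in> S" using an(3) by simp
  moreover have "v = D\<psi> (D\<phi> v)" by (simp add: Dpsi_Dphi)
  ultimately show ?thesis by blast
qed

lemma tangent_eq: "tangent_space M y = D\<psi> ` S"
  using tangent_sub tangent_contains by blast

lemma tangent_subspace: "subspace (tangent_space M y)"
  unfolding tangent_eq
  by (rule linear_subspace_image[OF _ sS])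
     (simp add: D\<psi>_def linear_frechet_derivative[OF psi_diff[OF s0V]])

lemma approx_tangent:
  assumes e: "e > 0"
  shows "\<exists>d>0. \<forall>z\<in>M. norm (z - y) < d \<longrightarrow> (\<exists>t\<in>tangent_space M y. norm (z - y - t) \<le> e * norm (z - y))"
proof -
  have bl: "bounded_linear D\<phi>" using Dphi by (rule has_derivative_bounded_linear)
  obtain K where K: "K > 0" "\<forall>x. norm (D\<phi> x) \<le> norm x * K"
    using bounded_linear.pos_bounded[OF bl] by blast
  define e' where "e' = e / (K + 1)"
  have e': "e' > 0" using e K by (simp add: e'_def)
  obtain d1 where d1: "d1 > 0" "\<forall>s. norm (s - s0) < d1 \<longrightarrow> norm (\<psi> s - \<psi> s0 - D\<psi> (s - s0)) \<le> e' * norm (s - s0)"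
    using Dpsi e' unfolding has_derivative_at_alt by blast
  obtain d2 where d2: "d2 > 0" "\<forall>z. norm (z - y) < d2 \<longrightarrow> norm (\<phi> z - \<phi> y - D\<phi> (z - y)) \<le> 1 * norm (z - y)"
    using Dphi unfolding has_derivative_at_alt by (meson zero_less_one)
  obtain r where r: "r > 0" "ball y r \<subseteq> U" using oU yU openE by blast
  define d where "d = min (min d2 r) (d1 / (K + 1))"
  have d: "d > 0" using d1 d2 r K by (simp add: d_def)
  show ?thesis
  proof (intro exI[of _ d] conjI ballI impI)
    fix z assume zM: "z \<in> M" and zd: "norm (z - y) < d"
    have zU: "z \<in> U" using zd r by (auto simp: d_def dist_norm norm_minus_commute)
    have "norm (\<phi> z - \<phi> y - D\<phi> (z - y)) \<le> norm (z - y)" using d2 zd by (simp add: d_def)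
    then have "norm (\<phi> z - s0) \<le> norm (D\<phi> (z - y)) + norm (z - y)"
      using norm_triangle_ineq[of "\<phi> z - \<phi> y - D\<phi> (z - y)" "D\<phi> (z - y)"] by (simp add: s0_def)
    also have "\<dots> \<le> (K + 1) * norm (z - y)" using K(2)[rule_format, of "z - y"] by (simp add: algebra_simps)
    finally have nz: "norm (\<phi> z - s0) \<le> (K + 1) * norm (z - y)" .
    also have "\<dots> < d1"
    proof -
      have "norm (z - y) < d1 / (K + 1)" using zd by (simp add: d_def)
      then show ?thesis using K by (simp add: pos_less_divide_eq mult.commute)
    qed
    finally have "norm (\<phi> z - s0) < d1" .
    then have "norm (\<psi> (\<phi> z) - \<psi> s0 - D\<psi> (\<phi> z - s0)) \<le> e' * norm (\<phi> z - s0)" using d1 by blast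
    also have "\<dots> \<le> e' * ((K + 1) * norm (z - y))" using nz e' by (simp add: mult_left_mono)
    also have "\<dots> = e * norm (z - y)" using K by (simp add: e'_def)
    finally have "norm (z - y - D\<psi> (\<phi> z - s0)) \<le> e * norm (z - y)"
      using psi_phi[OF zU] psi_s0 by simp
    moreover have "D\<psi> (\<phi> z - s0) \<in> tangent_space M y"
      by (rule tangent_contains) (use sS s0S phi_slice[OF zM zU] in \<open>auto intro: subspace_diff\<close>)
    ultimately show "\<exists>t\<in>tangent_space M y. norm (z - y - t) \<le> e * norm (z - y)" by blast
  qed (use d in auto)
qed

end

lemma chart_exists:
  assumes "embedded_submanifold M" "y \<in> M"
  shows "\<exists>U V \<phi> \<psi> S. slice_chart M U V \<phi> \<psi> S y"
  using assms unfolding embedded_submanifold_def slice_chart_def by metis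

lemma plus_ind_M: "x \<in> M \<Longrightarrow> plus_indicator h M x = h x"
  by (simp add: plus_indicator_def)
lemma plus_ind_notM: "x \<notin> M \<Longrightarrow> plus_indicator h M x = \<infinity>"
  by (simp add: plus_indicator_def)

lemma riem_to_frechet:
  assumes em: "embedded_submanifold M" and g: "g \<in> riem_frechet_subdiff M h y"
  shows "g \<in> frechet_subdiff (plus_indicator h M) y"
proof -
  from g obtain U \<Theta> where yM: "y \<in> M" and hy: "\<bar>h y\<bar> \<noteq> \<infinity>" and oU: "open U" and yU: "y \<in> U"
    and C1: "Ck_on 1 U \<Theta>" and lmin: "\<forall>z\<in>M \<inter> U. h z - ereal (\<Theta> z) \<ge> h y - ereal (\<Theta> y)"
    and gT: "g \<in> tangent_space M y"
    and grad: "\<forall>w\<in>tangent_space M y. inner g w = frechet_derivative \<Theta> (at y) w"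
    unfolding riem_frechet_subdiff_def mem_Collect_eq by (elim conjE exE) (rule that, assumption+)
  obtain c where c: "h y = ereal c" using hy by (cases "h y") auto
  obtain Uc Vc \<phi> \<psi> S where ch: "slice_chart M Uc Vc \<phi> \<psi> S y" using chart_exists[OF em yM] by blast
  define D\<Theta> where "D\<Theta> = frechet_derivative \<Theta> (at y)"
  have "\<Theta> differentiable (at y)" using C1 yU by (simp add: One_nat_def)
  then have DT: "(\<Theta> has_derivative D\<Theta>) (at y)" by (simp add: D\<Theta>_def frechet_derivative_works)
  have lin: "linear D\<Theta>" using DT has_derivative_linear by blast
  obtain K where K: "K > 0" "\<forall>x. norm (D\<Theta> x) \<le> norm x * K"
    using bounded_linear.pos_bounded[OF has_derivative_bounded_linear[OF DT]] by blast
  have "\<bar>plus_indicator h M y\<bar> \<noteq> \<infinity>" using hy yM by (simp add: plus_ind_M)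
  moreover have "\<exists>\<delta>>0. \<forall>z. norm (z - y) < \<delta> \<longrightarrow>
      plus_indicator h M z \<ge> ereal (real_of_ereal (plus_indicator h M y) + inner g (z - y) - \<epsilon> * norm (z - y))"
    if \<epsilon>: "\<epsilon> > 0" for \<epsilon>
  proof -
    define \<epsilon>1 where "\<epsilon>1 = \<epsilon> / (2 * (K + norm g + 1))"
    have \<epsilon>1: "\<epsilon>1 > 0" using \<epsilon> K by (simp add: \<epsilon>1_def add_pos_nonneg)
    have \<epsilon>1b: "(norm g + K) * \<epsilon>1 \<le> \<epsilon> / 2"
    proof -
      have "(norm g + K) * \<epsilon>1 \<le> (K + norm g + 1) * \<epsilon>1" using \<epsilon>1 by (intro mult_right_mono) auto
      also have "\<dots> = \<epsilon> / 2"
      proof -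
        have pos: "K + norm g + 1 > 0" using K norm_ge_zero[of g] by linarith
        then show ?thesis unfolding \<epsilon>1_def by (simp add: field_simps)
      qed
      finally show ?thesis .
    qed
    obtain d1 where d1: "d1 > 0" "\<forall>z\<in>M. norm (z - y) < d1 \<longrightarrow>
        (\<exists>t\<in>tangent_space M y. norm (z - y - t) \<le> \<epsilon>1 * norm (z - y))"
      using slice_chart.approx_tangent[OF ch \<epsilon>1] by blast
    obtain d2 where d2: "d2 > 0" "\<forall>z. norm (z - y) < d2 \<longrightarrow>
        norm (\<Theta> z - \<Theta> y - D\<Theta> (z - y)) \<le> (\<epsilon>/2) * norm (z - y)"
      using DT \<epsilon> unfolding has_derivative_at_alt by (meson half_gt_zero)
    obtain d3 where d3: "d3 > 0" "ball y d3 \<subseteq> U" using oU yU openE by blast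
    define \<delta> where "\<delta> = min d1 (min d2 d3)"
    show ?thesis
    proof (intro exI[of _ \<delta>] conjI allI impI)
      show "\<delta> > 0" using d1 d2 d3 by (simp add: \<delta>_def)
      fix z assume zd: "norm (z - y) < \<delta>"
      show "plus_indicator h M z \<ge> ereal (real_of_ereal (plus_indicator h M y) + inner g (z - y) - \<epsilon> * norm (z - y))"
      proof (cases "z \<in> M")
        case False then show ?thesis by (simp add: plus_ind_notM)
      next
        case zM: True
        have zU: "z \<in> U" using zd d3 by (auto simp: \<delta>_def dist_norm norm_minus_commute)
        obtain t where t: "t \<in> tangent_space M y" "norm (z - y - t) \<le> \<epsilon>1 * norm (z - y)"
          using d1 zM zd by (auto simp: \<delta>_def)
        define err where "err = z - y - t"
        have Dsplit: "D\<Theta> (z - y) = inner g t + D\<Theta> err"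
          using grad t(1) linear_add[OF lin, of t err] by (simp add: err_def D\<Theta>_def)
        have gsplit: "inner g (z - y) = inner g t + inner g err" by (simp add: err_def inner_diff_right)
        have ge: "\<bar>inner g err\<bar> \<le> norm g * (\<epsilon>1 * norm (z - y))"
          using Cauchy_Schwarz_ineq2[of g err] t(2) by (simp add: err_def)
             (meson mult_left_mono norm_ge_zero order_trans)
        have De: "\<bar>D\<Theta> err\<bar> \<le> K * (\<epsilon>1 * norm (z - y))"
          using K(2)[rule_format, of err] t(2) K(1) by (simp add: err_def)
             (smt (verit) mult.commute mult_left_mono)
        have "(norm g + K) * (\<epsilon>1 * norm (z - y)) \<le> \<epsilon> / 2 * norm (z - y)"
          using mult_right_mono[OF \<epsilon>1b norm_ge_zero[of "z - y"]] by (simp add: mult.assoc)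
        then have sum_b: "norm g * (\<epsilon>1 * norm (z - y)) + K * (\<epsilon>1 * norm (z - y)) \<le> \<epsilon> / 2 * norm (z - y)"
          by (simp add: algebra_simps)
        have Td: "\<bar>\<Theta> z - \<Theta> y - D\<Theta> (z - y)\<bar> \<le> (\<epsilon>/2) * norm (z - y)"
          using d2 zd by (auto simp: \<delta>_def)
        have key: "\<Theta> z - \<Theta> y \<ge> inner g (z - y) - \<epsilon> * norm (z - y)"
          using Dsplit gsplit ge De sum_b Td by linarith
        have lm: "h z - ereal (\<Theta> z) \<ge> ereal c - ereal (\<Theta> y)" using lmin zM zU c by auto
        show ?thesis
        proof (cases "h z")
          case (real hz)
          then have "hz - \<Theta> z \<ge> c - \<Theta> y" using lm by simp
          then show ?thesis using real key zM yM c by (simp add: plus_ind_M)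
        next
          case PInf then show ?thesis using zM by (simp add: plus_ind_M)
        next
          case MInf then show ?thesis using lm by simp
        qed
      qed
    qed
  qed
  ultimately show ?thesis unfolding frechet_subdiff_def mem_Collect_eq by blast
qed

lemma frechet_to_riem:
  assumes em: "embedded_submanifold M" and v: "v \<in> frechet_subdiff (plus_indicator h M) y"
  shows "y \<in> M \<and> (\<exists>g\<in>riem_frechet_subdiff M h y. norm g \<le> norm v)"
proof -
  define f where "f = plus_indicator h M"
  from v have fy: "\<bar>f y\<bar> \<noteq> \<infinity>"
    and fr: "\<And>\<epsilon>. \<epsilon> > 0 \<Longrightarrow> \<exists>\<delta>>0. \<forall>z. norm (z - y) < \<delta> \<longrightarrow>
            f z \<ge> ereal (real_of_ereal (f y) + inner v (z - y) - \<epsilon> * norm (z - y))"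
    unfolding frechet_subdiff_def f_def by auto
  have yM: "y \<in> M" using fy by (cases "y \<in> M") (auto simp: f_def plus_ind_notM)
  have fM: "\<And>z. z \<in> M \<Longrightarrow> f z = h z" by (simp add: f_def plus_ind_M)
  obtain c where c: "h y = ereal c" using fy fM[OF yM] by (cases "h y") auto
  have rfy: "real_of_ereal (f y) = c" using c fM[OF yM] by simp
  obtain r0 where r0: "r0 > 0" "\<forall>z. norm (z - y) < r0 \<longrightarrow> f z \<ge> ereal (c + inner v (z - y) - 1 * norm (z - y))"
    using fr[of 1] rfy by auto
  define r1 where "r1 = r0 / 2"
  have r1: "r1 > 0" "r1 < r0" using r0 by (auto simp: r1_def)
  define q where "q z = (if f z = \<infinity> then 0 else max 0 (c + inner v (z - y) - real_of_ereal (f z)))" for z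
  have q_ge: "q z \<ge> c + inner v (z - y) - real_of_ereal (f z)" if "f z \<noteq> \<infinity>" for z
    using that by (simp add: q_def)
  have qb: "0 \<le> q z \<and> q z \<le> norm (z - y)" if "norm (z - y) \<le> r1" for z
  proof -
    have fz: "f z \<ge> ereal (c + inner v (z - y) - 1 * norm (z - y))" using r0 that r1 by auto
    show ?thesis
    proof (cases "f z")
      case (real fz')
      then show ?thesis using fz by (simp add: q_def)
    next
      case PInf then show ?thesis by (simp add: q_def)
    next
      case MInf then show ?thesis using fz by simp
    qed
  qed
  have qf: "\<exists>d>0. \<forall>z. norm (z - y) < d \<longrightarrow> q z \<le> e * norm (z - y)" if e: "e > 0" for e
  proof -
    obtain d where d: "d > 0" "\<forall>z. norm (z - y) < d \<longrightarrow> f z \<ge> ereal (c + inner v (z - y) - e * norm (z - y))"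
      using fr[OF e] rfy by auto
    show ?thesis
    proof (intro exI[of _ d] conjI allI impI)
      fix z assume z: "norm (z - y) < d"
      then have fz: "f z \<ge> ereal (c + inner v (z - y) - e * norm (z - y))" using d by auto
      have en: "0 \<le> e * norm (z - y)" using e by simp
      have qz: "q z \<le> e * norm (z - y)"
      proof (cases "f z")
        case (real fz')
        then show ?thesis using fz en by (simp add: q_def)
      next
        case PInf then show ?thesis using en by (simp add: q_def)
      next
        case MInf then show ?thesis using fz by simp
      qed
      then show "q z \<le> e * norm (z - y)" .
    qed (use d in auto)
  qed
  obtain \<rho> \<rho>' where rho: "\<forall>x. (\<rho> has_derivative \<rho>' x) (at x)" "\<rho>' y = (\<lambda>h. 0)"
     "\<forall>e. continuous_on UNIV (\<lambda>x. \<rho>' x e)" "\<rho> y = 0" "\<forall>z. norm (z - y) \<le> r1 \<longrightarrow> q z \<le> \<rho> z"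
    using rho_exists[of r1 y q, OF r1(1) qb qf] by blast
  define \<Theta> where "\<Theta> z = c + inner v (z - y) - \<rho> z" for z
  have Tder: "(\<Theta> has_derivative (\<lambda>k. inner v k - \<rho>' x k)) (at x)" for x
    unfolding \<Theta>_def using rho(1)[rule_format, of x]
    by (auto intro!: derivative_eq_intros)
  have fdT: "frechet_derivative \<Theta> (at x) = (\<lambda>k. inner v k - \<rho>' x k)" for x
    using frechet_derivative_at[OF Tder[of x]] by simp
  define U where "U = ball y r1"
  have C1: "Ck_on 1 U \<Theta>"
    unfolding One_nat_def Ck_on.simps
  proof (intro conjI ballI)
    show "\<Theta> differentiable (at x)" for x using Tder[of x] by (auto simp: differentiable_def)
    fix e :: 'a
    show "continuous_on U (\<lambda>x. frechet_derivative \<Theta> (at x) e)"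
      unfolding fdT by (intro continuous_intros continuous_on_subset[OF rho(3)[rule_format]]) auto
  qed
  have Ty: "\<Theta> y = c" using rho(4) by (simp add: \<Theta>_def)
  have lmin: "\<forall>z\<in>M \<inter> U. h z - ereal (\<Theta> z) \<ge> h y - ereal (\<Theta> y)"
  proof
    fix z assume z: "z \<in> M \<inter> U"
    then have zr: "norm (z - y) \<le> r1" by (auto simp: U_def dist_norm norm_minus_commute)
    have hz: "h z = f z" using z fM by auto
    show "h z - ereal (\<Theta> z) \<ge> h y - ereal (\<Theta> y)"
    proof (cases "f z")
      case (real fz')
      then have "q z \<ge> c + inner v (z - y) - fz'" using q_ge[of z] by simp
      moreover have "q z \<le> \<rho> z" using rho(5) zr by auto
      ultimately have "fz' - \<Theta> z \<ge> 0" by (simp add: \<Theta>_def)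
      then show ?thesis using real hz c Ty by simp
    next
      case PInf then show ?thesis using hz c Ty by simp
    next
      case MInf
      have "f z \<ge> ereal (c + inner v (z - y) - 1 * norm (z - y))" using r0 zr r1 by auto
      then show ?thesis using MInf by simp
    qed
  qed
  obtain Uc Vc \<phi> \<psi> S where ch: "slice_chart M Uc Vc \<phi> \<psi> S y" using chart_exists[OF em yM] by blast
  have sT: "subspace (tangent_space M y)" by (rule slice_chart.tangent_subspace[OF ch])
  obtain a n where an: "a \<in> span (tangent_space M y)" "\<And>w. w \<in> span (tangent_space M y) \<Longrightarrow> orthogonal n w"
    "v = a + n"
    using orthogonal_subspace_decomp_exists by blast
  have spT: "span (tangent_space M y) = tangent_space M y" using sT by (simp add: span_eq_iff)
  have aT: "a \<in> tangent_space M y" using an(1) spT by simp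
  have grad: "\<forall>w\<in>tangent_space M y. inner a w = frechet_derivative \<Theta> (at y) w"
  proof
    fix w assume w: "w \<in> tangent_space M y"
    have "inner n w = 0" using an(2)[of w] w spT by (simp add: orthogonal_def)
    then show "inner a w = frechet_derivative \<Theta> (at y) w"
      using an(3) rho(2) by (simp add: fdT inner_add_left)
  qed
  have "orthogonal a n" using an(2)[OF an(1)] by (simp add: orthogonal_commute)
  then have "(norm v)\<^sup>2 = (norm a)\<^sup>2 + (norm n)\<^sup>2" using an(3) norm_add_Pythagorean by simp
  then have "(norm a)\<^sup>2 \<le> (norm v)\<^sup>2" by simp
  then have na: "norm a \<le> norm v" by (simp add: power2_le_iff_abs_le)
  have hy: "\<bar>h y\<bar> \<noteq> \<infinity>" using c by simp
  have "a \<in> riem_frechet_subdiff M h y"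
    unfolding riem_frechet_subdiff_def mem_Collect_eq
    using yM hy C1 lmin aT grad r1 by (auto simp: U_def intro!: exI[of _ U] exI[of _ \<Theta>])
  then show ?thesis using yM na by blast
qed

lemma riem_lim_to_lim:
  assumes em: "embedded_submanifold M" and g: "g \<in> riem_limiting_subdiff M h x"
  shows "g \<in> limiting_subdiff (plus_indicator h M) x"
proof -
  from g obtain xs vs where xM: "x \<in> M" and hx: "\<bar>h x\<bar> \<noteq> \<infinity>" and xsM: "\<forall>k. xs k \<in> M"
    and xs: "xs \<longlonglongrightarrow> x" and hxs: "(\<lambda>k. h (xs k)) \<longlonglongrightarrow> h x"
    and vs: "\<forall>k. vs k \<in> riem_frechet_subdiff M h (xs k)" and vsl: "vs \<longlonglongrightarrow> g"
    unfolding riem_limiting_subdiff_def mem_Collect_eq by (elim conjE exE) (rule that, assumption+)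
  have "(\<lambda>k. plus_indicator h M (xs k)) \<longlonglongrightarrow> plus_indicator h M x"
    using hxs xsM xM by (simp add: plus_ind_M)
  moreover have "\<forall>k. vs k \<in> frechet_subdiff (plus_indicator h M) (xs k)"
    using vs riem_to_frechet[OF em] by blast
  moreover have "\<bar>plus_indicator h M x\<bar> \<noteq> \<infinity>" using hx xM by (simp add: plus_ind_M)
  ultimately show ?thesis unfolding limiting_subdiff_def mem_Collect_eq using xs vsl by blast
qed

lemma lim_to_riem_lim:
  assumes em: "embedded_submanifold M" and v: "v \<in> limiting_subdiff (plus_indicator h M) x"
  shows "x \<in> M \<and> (\<exists>g\<in>riem_limiting_subdiff M h x. norm g \<le> norm v)"
proof -
  define f where "f = plus_indicator h M"
  have v': "v \<in> limiting_subdiff f x" using v by (simp add: f_def)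
  from v' obtain xs vs where fx: "\<bar>f x\<bar> \<noteq> \<infinity>"
    and xs: "xs \<longlonglongrightarrow> x" and fxs: "(\<lambda>k. f (xs k)) \<longlonglongrightarrow> f x"
    and vs: "\<forall>k. vs k \<in> frechet_subdiff f (xs k)" and vsl: "vs \<longlonglongrightarrow> v"
    unfolding limiting_subdiff_def mem_Collect_eq by (elim conjE exE) (rule that, assumption+)
  have xM: "x \<in> M" using fx by (cases "x \<in> M") (auto simp: f_def plus_ind_notM)
  have ex: "\<forall>k. xs k \<in> M \<and> (\<exists>g\<in>riem_frechet_subdiff M h (xs k). norm g \<le> norm (vs k))"
    using vs frechet_to_riem[OF em] unfolding f_def by blast
  then obtain G where G: "\<forall>k. G k \<in> riem_frechet_subdiff M h (xs k) \<and> norm (G k) \<le> norm (vs k)"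
    by metis
  have xsM: "\<forall>k. xs k \<in> M" using ex by blast
  obtain B where B: "\<forall>k. norm (vs k) \<le> B"
    using convergent_imp_bounded[OF vsl] unfolding bounded_iff by auto
  have "bounded (range G)"
    unfolding bounded_iff using G B by (intro exI[of _ B]) (auto intro: order_trans)
  then obtain l r where r: "strict_mono r" "(G \<circ> r) \<longlonglongrightarrow> l"
    using bounded_imp_convergent_subsequence by blast
  have hx: "\<bar>h x\<bar> \<noteq> \<infinity>" using fx xM by (simp add: f_def plus_ind_M)
  have xsr: "(xs \<circ> r) \<longlonglongrightarrow> x" using LIMSEQ_subseq_LIMSEQ[OF xs r(1)] .
  have "(\<lambda>k. f (xs (r k))) \<longlonglongrightarrow> f x" using LIMSEQ_subseq_LIMSEQ[OF fxs r(1)] by (simp add: o_def)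
  then have hxsr: "(\<lambda>k. h ((xs \<circ> r) k)) \<longlonglongrightarrow> h x" using xsM xM by (simp add: f_def plus_ind_M)
  have "l \<in> riem_limiting_subdiff M h x"
    unfolding riem_limiting_subdiff_def mem_Collect_eq
    using xM hx xsM xsr hxsr G r(2)
    by (intro conjI exI[of _ "xs \<circ> r"] exI[of _ "G \<circ> r"]) auto
  moreover have "norm l \<le> norm v"
  proof (rule LIMSEQ_le)
    show "(\<lambda>k. norm ((G \<circ> r) k)) \<longlonglongrightarrow> norm l" using r(2) by (rule tendsto_norm)
    show "(\<lambda>k. norm ((vs \<circ> r) k)) \<longlonglongrightarrow> norm v"
      using LIMSEQ_subseq_LIMSEQ[OF vsl r(1)] by (rule tendsto_norm)
    show "\<exists>N. \<forall>n\<ge>N. norm ((G \<circ> r) n) \<le> norm ((vs \<circ> r) n)" using G by auto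
  qed
  ultimately show ?thesis using xM by blast
qed

lemma infdist_dom:
  assumes "A \<noteq> {}" "B \<noteq> {}" "\<forall>b\<in>B. \<exists>a\<in>A. norm a \<le> norm b"
  shows "infdist 0 A \<le> infdist 0 B"
  unfolding infdist_notempty[OF assms(2)]
proof (rule cINF_greatest[OF assms(2)])
  fix b assume "b \<in> B"
  then obtain a where a: "a \<in> A" "norm a \<le> norm b" using assms(3) by blast
  have "infdist 0 A \<le> dist 0 a" by (rule infdist_le[OF a(1)])
  then show "infdist 0 A \<le> dist 0 b" using a(2) by simp
qed

lemma KL_transfer:
  assumes KL: "KL_at sd1 D1 g1 xb" and fin: "\<bar>g1 xb\<bar> \<noteq> \<infinity>" and eqx: "g2 xb = g1 xb"
    and tr: "\<And>z. z \<in> D2 \<Longrightarrow> sd2 z \<noteq> {} \<Longrightarrow>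
       z \<in> D1 \<and> g2 z = g1 z \<and> sd1 z \<noteq> {} \<and> infdist 0 (sd1 z) \<le> infdist 0 (sd2 z)"
  shows "KL_at sd2 D2 g2 xb"
proof -
  obtain \<eta> U \<phi> where k: "\<eta> > 0" "open U" "xb \<in> U"
    "continuous_on {s. 0 \<le> s \<and> ereal s < \<eta>} \<phi>"
    "concave_on {s. 0 \<le> s \<and> ereal s < \<eta>} \<phi>"
    "\<phi> 0 = 0" "\<forall>s. 0 \<le> s \<and> ereal s < \<eta> \<longrightarrow> \<phi> s \<ge> 0"
    "\<forall>s. 0 < s \<and> ereal s < \<eta> \<longrightarrow> \<phi> differentiable (at s) \<and> deriv \<phi> s > 0"
    "continuous_on {s. 0 < s \<and> ereal s < \<eta>} (deriv \<phi>)"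
    "\<forall>x\<in>U \<inter> D1. g1 xb < g1 x \<and> g1 x < g1 xb + \<eta> \<longrightarrow> sd1 x \<noteq> {} \<longrightarrow>
            deriv \<phi> (real_of_ereal (g1 x - g1 xb)) * infdist 0 (sd1 x) \<ge> 1"
    using KL unfolding KL_at_def by blast
  obtain c where c: "g1 xb = ereal c" using fin by (cases "g1 xb") auto
  have main: "deriv \<phi> (real_of_ereal (g2 x - g2 xb)) * infdist 0 (sd2 x) \<ge> 1"
    if x: "x \<in> U \<inter> D2" "g2 xb < g2 x" "g2 x < g2 xb + \<eta>" "sd2 x \<noteq> {}" for x
  proof -
    have t: "x \<in> D1" "g2 x = g1 x" "sd1 x \<noteq> {}" "infdist 0 (sd1 x) \<le> infdist 0 (sd2 x)"
      using tr[of x] x by auto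
    have lt: "g1 xb < g1 x" "g1 x < g1 xb + \<eta>" using x t(2) eqx by auto
    have s: "0 < real_of_ereal (g1 x - g1 xb) \<and> ereal (real_of_ereal (g1 x - g1 xb)) < \<eta>"
      using lt k(1) c by (cases "g1 x"; cases \<eta>) auto
    have dpos: "deriv \<phi> (real_of_ereal (g1 x - g1 xb)) > 0" using k(8) s by blast
    have "1 \<le> deriv \<phi> (real_of_ereal (g1 x - g1 xb)) * infdist 0 (sd1 x)"
      using k(10) x(1) t(1,3) lt by blast
    also have "\<dots> \<le> deriv \<phi> (real_of_ereal (g1 x - g1 xb)) * infdist 0 (sd2 x)"
      using dpos t(4) by (intro mult_left_mono) auto
    finally show ?thesis using t(2) eqx by simp
  qed
  show ?thesis unfolding KL_at_def
    by (rule exI[of _ \<eta>], rule exI[of _ U], rule exI[of _ \<phi>]) (use k main in blast)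
qed

lemma proper_equiv: "proper_on UNIV (plus_indicator h M) \<longleftrightarrow> proper_on M h"
  unfolding proper_on_def plus_indicator_def by auto

theorem lemma2p10:
  fixes h :: "'a::euclidean_space \<Rightarrow> ereal" and M :: "'a set"
  assumes "proper_on UNIV h"
    and "compact M" and "embedded_submanifold M"
  shows "(KL_function_E (plus_indicator h M) \<longrightarrow> KL_function_M M h)
       \<and> (KL_function_M M h \<longrightarrow> KL_function_E (plus_indicator h M))"
proof (intro conjI impI)
  note em = assms(3)
  define f where "f = plus_indicator h M"
  have fM: "\<And>z. z \<in> M \<Longrightarrow> f z = h z" by (simp add: f_def plus_ind_M)
  {
    assume E: "KL_function_E (plus_indicator h M)"
    show "KL_function_M M h"
      unfolding KL_function_def
    proof (intro conjI ballI impI)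
      show "proper_on M h" using E proper_equiv unfolding KL_function_def by blast
      fix x assume xM: "x \<in> M" and ne: "riem_limiting_subdiff M h x \<noteq> {}"
      then obtain g where g: "g \<in> riem_limiting_subdiff M h x" by blast
      have gL: "g \<in> limiting_subdiff f x" using riem_lim_to_lim[OF em g] by (simp add: f_def)
      then have "KL_at (limiting_subdiff f) UNIV f x" using E unfolding KL_function_def f_def by blast
      moreover have "\<bar>f x\<bar> \<noteq> \<infinity>" using gL unfolding limiting_subdiff_def mem_Collect_eq by (rule conjunct1)
      ultimately show "KL_at (riem_limiting_subdiff M h) M h x"
      proof (rule KL_transfer)
        show "h x = f x" using fM[OF xM] by simp
        fix z assume zM: "z \<in> M" and nz: "riem_limiting_subdiff M h z \<noteq> {}"
        have sub: "riem_limiting_subdiff M h z \<subseteq> limiting_subdiff f z"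
          using riem_lim_to_lim[OF em] by (auto simp: f_def)
        show "z \<in> UNIV \<and> h z = f z \<and> limiting_subdiff f z \<noteq> {} \<and>
            infdist 0 (limiting_subdiff f z) \<le> infdist 0 (riem_limiting_subdiff M h z)"
          using sub nz fM[OF zM] infdist_dom[of "limiting_subdiff f z" "riem_limiting_subdiff M h z"]
          by auto
      qed
    qed
  }
  {
    assume R: "KL_function_M M h"
    show "KL_function_E (plus_indicator h M)"
      unfolding KL_function_def f_def[symmetric]
    proof (intro conjI ballI impI)
      show "proper_on UNIV f" using R proper_equiv unfolding KL_function_def f_def by blast
      fix x assume ne: "limiting_subdiff f x \<noteq> {}"
      then obtain v where v: "v \<in> limiting_subdiff f x" by blast
      obtain g where xM: "x \<in> M" and g: "g \<in> riem_limiting_subdiff M h x"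
        using lim_to_riem_lim[OF em v[unfolded f_def]] by blast
      have "KL_at (riem_limiting_subdiff M h) M h x" using R xM g unfolding KL_function_def by blast
      moreover have "\<bar>h x\<bar> \<noteq> \<infinity>" using g unfolding riem_limiting_subdiff_def mem_Collect_eq by (elim conjE)
      ultimately show "KL_at (limiting_subdiff f) UNIV f x"
      proof (rule KL_transfer)
        show "f x = h x" using fM[OF xM] by simp
        fix z assume nz: "limiting_subdiff f z \<noteq> {}"
        then obtain w where w: "w \<in> limiting_subdiff f z" by blast
        have zM: "z \<in> M" using lim_to_riem_lim[OF em w[unfolded f_def]] by blast
        have dom: "\<forall>b\<in>limiting_subdiff f z. \<exists>a\<in>riem_limiting_subdiff M h z. norm a \<le> norm b"
          using lim_to_riem_lim[OF em] by (simp add: f_def)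
        then have "riem_limiting_subdiff M h z \<noteq> {}" using w by blast
        then show "z \<in> M \<and> f z = h z \<and> riem_limiting_subdiff M h z \<noteq> {} \<and>
            infdist 0 (riem_limiting_subdiff M h z) \<le> infdist 0 (limiting_subdiff f z)"
          using zM fM[OF zM] infdist_dom[OF _ nz dom] by auto
      qed
    qed
  }
qed

end
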